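(* Let $(\mathcal{A},m)$ be a multiarrangement and $H_0\in\mathcal{A}$. Then $(\mathcal{A},m+k\delta_{H_0})$ has a good summand to $H_0$ for all sufficiently large integers $k$.
   Context: Let $\mathbb{K}$ be a field, $S=\mathbb{K}[x_1,\dots,x_\ell]$. A multiarrangement $(\mathcal{A},m)$ is a finite set of linear hyperplanes $H=\ker\alpha_H$ of $\mathbb{K}^\ell$ with multiplicity $m:\mathcal{A}\to\mathbb{Z}_{>0}$. $D(\mathcal{A},m)=\{\theta\in\mathrm{Der}_{\mathbb{K}}(S):\theta(\alpha_H)\in\alpha_H^{m(H)}S\ \forall H\}$. $\delta_{H_0}$ is the function on $\mathcal{A}$ equal to $1$ at $H_0$ and $0$ elsewhere. A good summand to $H_0$ for $(\mathcal{A},m)$ is a homogeneous $\theta_0\in D(\mathcal{A},m)$ with all $\theta_0(x_i)$ zero or homogeneous of degree $m(H_0)$, and $\theta_0(\alpha_{H_0})=\alpha_{H_0}^{m(H_0)}$. *)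

theory Defs
  imports "HOL-Library.Poly_Mapping"
begin

text \<open>Multivariate polynomials over a field: finitely supported maps from monomials
  (exponent vectors) to coefficients. Variable x_i corresponds to index i;
  the ring S = K[x_0,...,x_(l-1)] is the set of polynomials only involving variables i < l.\<close>

type_synonym 'a mpoly = "(nat \<Rightarrow>\<^sub>0 nat) \<Rightarrow>\<^sub>0 'a"

definition in_S :: "nat \<Rightarrow> 'a::field mpoly \<Rightarrow> bool" where
  "in_S l p \<longleftrightarrow> (\<forall>t::nat \<Rightarrow>\<^sub>0 nat. t \<in> Poly_Mapping.keys p \<longrightarrow> Poly_Mapping.keys t \<subseteq> {..<l})"

definition mdeg :: "(nat \<Rightarrow>\<^sub>0 nat) \<Rightarrow> nat" where
  "mdeg t = (\<Sum>i\<in>Poly_Mapping.keys t. Poly_Mapping.lookup t i)"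

text \<open>Homogeneous of degree d (the zero polynomial counts as homogeneous of every degree).\<close>
definition homog :: "nat \<Rightarrow> 'a::field mpoly \<Rightarrow> bool" where
  "homog d p \<longleftrightarrow> (\<forall>t::nat \<Rightarrow>\<^sub>0 nat. t \<in> Poly_Mapping.keys p \<longrightarrow> mdeg t = d)"

definition var :: "nat \<Rightarrow> 'a::field mpoly" where
  "var i = Poly_Mapping.single (Poly_Mapping.single i 1) 1"

definition const :: "'a::field \<Rightarrow> 'a mpoly" where
  "const c = Poly_Mapping.single 0 c"

definition linform :: "nat \<Rightarrow> (nat \<Rightarrow> 'a::field) \<Rightarrow> 'a mpoly" where
  "linform l a = (\<Sum>i<l. const (a i) * var i)"

text \<open>A K-derivation of S is determined by its values theta(x_i), i < l; we represent it
  by the function i \<mapsto> theta(x_i), which is zero outside {..<l}.\<close>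
definition is_der :: "nat \<Rightarrow> (nat \<Rightarrow> 'a::field mpoly) \<Rightarrow> bool" where
  "is_der l \<theta> \<longleftrightarrow> (\<forall>i<l. in_S l (\<theta> i)) \<and> (\<forall>i\<ge>l. \<theta> i = 0)"

definition der_lin :: "nat \<Rightarrow> (nat \<Rightarrow> 'a::field mpoly) \<Rightarrow> (nat \<Rightarrow> 'a) \<Rightarrow> 'a mpoly" where
  "der_lin l \<theta> a = (\<Sum>i<l. const (a i) * \<theta> i)"

definition dvd_S :: "nat \<Rightarrow> 'a::field mpoly \<Rightarrow> 'a mpoly \<Rightarrow> bool" where
  "dvd_S l p q \<longleftrightarrow> (\<exists>r. in_S l r \<and> q = p * r)"

text \<open>A multiarrangement in K^l: a finite set A of hyperplane labels, each H with defining
  linear form alpha H (a nonzero covector supported on {..<l}), distinct labels giving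
  distinct hyperplanes (non-proportional forms), and a positive multiplicity m.\<close>
definition multiarr :: "nat \<Rightarrow> 'h set \<Rightarrow> ('h \<Rightarrow> nat \<Rightarrow> 'a::field) \<Rightarrow> ('h \<Rightarrow> nat) \<Rightarrow> bool" where
  "multiarr l A \<alpha> m \<longleftrightarrow> finite A \<and>
     (\<forall>H\<in>A. (\<forall>i\<ge>l. \<alpha> H i = 0) \<and> (\<exists>i<l. \<alpha> H i \<noteq> 0) \<and> m H > 0) \<and>
     (\<forall>H\<in>A. \<forall>H'\<in>A. H \<noteq> H' \<longrightarrow> (\<forall>c. \<alpha> H \<noteq> (\<lambda>i. c * \<alpha> H' i)))"

definition in_D :: "nat \<Rightarrow> 'h set \<Rightarrow> ('h \<Rightarrow> nat \<Rightarrow> 'a::field) \<Rightarrow> ('h \<Rightarrow> nat) \<Rightarrow> (nat \<Rightarrow> 'a mpoly) \<Rightarrow> bool" where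
  "in_D l A \<alpha> m \<theta> \<longleftrightarrow> is_der l \<theta> \<and>
     (\<forall>H\<in>A. dvd_S l (linform l (\<alpha> H) ^ m H) (der_lin l \<theta> (\<alpha> H)))"

definition good_summand :: "nat \<Rightarrow> 'h set \<Rightarrow> ('h \<Rightarrow> nat \<Rightarrow> 'a::field) \<Rightarrow> ('h \<Rightarrow> nat) \<Rightarrow> 'h \<Rightarrow> (nat \<Rightarrow> 'a mpoly) \<Rightarrow> bool" where
  "good_summand l A \<alpha> m H0 \<theta> \<longleftrightarrow> in_D l A \<alpha> m \<theta> \<and>
     (\<forall>i<l. homog (m H0) (\<theta> i)) \<and>
     der_lin l \<theta> (\<alpha> H0) = linform l (\<alpha> H0) ^ m H0"

definition delta :: "'h \<Rightarrow> 'h \<Rightarrow> nat" where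
  "delta H0 H = (if H = H0 then 1 else 0)"

end

theory Submission
  imports Defs
begin


lemma mdeg_superset:
  assumes "finite K" "Poly_Mapping.keys t \<subseteq> K"
  shows "mdeg t = (\<Sum>i\<in>K. Poly_Mapping.lookup t i)"
  unfolding mdeg_def
  by (rule sum.mono_neutral_left) (use assms in \<open>auto simp: in_keys_iff\<close>)

lemma mdeg_add: "mdeg (s + t) = mdeg s + mdeg t"
proof -
  let ?K = "Poly_Mapping.keys s \<union> Poly_Mapping.keys t"
  have "mdeg (s+t) = (\<Sum>i\<in>?K. Poly_Mapping.lookup (s+t) i)"
    by (rule mdeg_superset) (use keys_add[of s t] in auto)
  also have "\<dots> = (\<Sum>i\<in>?K. Poly_Mapping.lookup s i) + (\<Sum>i\<in>?K. Poly_Mapping.lookup t i)"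
    by (simp add: lookup_add sum.distrib)
  also have "\<dots> = mdeg s + mdeg t"
    by (simp add: mdeg_superset[symmetric])
  finally show ?thesis .
qed

lemma mdeg_zero[simp]: "mdeg 0 = 0" by (simp add: mdeg_def)
lemma mdeg_single[simp]: "mdeg (Poly_Mapping.single i 1) = 1" by (simp add: mdeg_def)

lemma homog_zero[simp]: "homog d 0" by (simp add: homog_def)

lemma homog_add: "homog d p \<Longrightarrow> homog d q \<Longrightarrow> homog d (p + q)"
  unfolding homog_def using keys_add[of p q] by (meson UnE subsetD)

lemma homog_mult: "homog a p \<Longrightarrow> homog b q \<Longrightarrow> homog (a + b) (p * q)"
  unfolding homog_def using keys_mult[of p q] by (force simp: mdeg_add)

lemma homog_const[simp]: "homog 0 (const c)"
  by (simp add: homog_def const_def)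

lemma homog_one[simp]: "homog 0 1"
  by (simp add: homog_def)

lemma homog_var[simp]: "homog 1 (var i)"
  by (simp add: homog_def var_def mdeg_def)

lemma homog_sum: "(\<And>i. i \<in> I \<Longrightarrow> homog d (f i)) \<Longrightarrow> homog d (\<Sum>i\<in>I. f i)"
  by (induction I rule: infinite_finite_induct) (auto intro: homog_add)

lemma homog_power: "homog d p \<Longrightarrow> homog (n * d) (p ^ n)"
  by (induction n) (auto dest: homog_mult[of d p])

lemma homog_prod: "(\<And>i. i \<in> I \<Longrightarrow> homog (e i) (f i)) \<Longrightarrow> homog (\<Sum>i\<in>I. e i) (\<Prod>i\<in>I. f i)"
  by (induction I rule: infinite_finite_induct) (auto intro: homog_mult)

lemma homog_linform[simp]: "homog 1 (linform l a)"
  unfolding linform_def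
  by (rule homog_sum) (metis add_0 homog_const homog_mult homog_var)

lemma homog_unique: "homog d p \<Longrightarrow> homog e p \<Longrightarrow> p \<noteq> 0 \<Longrightarrow> d = e"
  unfolding homog_def by (metis keys_eq_empty ex_in_conv)

lemma in_S_zero[simp]: "in_S l 0" by (simp add: in_S_def)
lemma in_S_one[simp]: "in_S l 1" by (simp add: in_S_def)
lemma in_S_add: "in_S l p \<Longrightarrow> in_S l q \<Longrightarrow> in_S l (p + q)"
  unfolding in_S_def using keys_add[of p q] by (meson UnE subsetD)
lemma in_S_mult: "in_S l p \<Longrightarrow> in_S l q \<Longrightarrow> in_S l (p * q)"
  unfolding in_S_def using keys_mult[of p q] keys_add by fastforce
lemma in_S_const[simp]: "in_S l (const c)"
  by (simp add: in_S_def const_def)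
lemma in_S_var: "i < l \<Longrightarrow> in_S l (var i)"
  by (simp add: in_S_def var_def)
lemma in_S_sum: "(\<And>i. i \<in> I \<Longrightarrow> in_S l (f i)) \<Longrightarrow> in_S l (\<Sum>i\<in>I. f i)"
  by (induction I rule: infinite_finite_induct) (auto intro: in_S_add)
lemma in_S_prod: "(\<And>i. i \<in> I \<Longrightarrow> in_S l (f i)) \<Longrightarrow> in_S l (\<Prod>i\<in>I. f i)"
  by (induction I rule: infinite_finite_induct) (auto intro: in_S_mult)
lemma in_S_power: "in_S l p \<Longrightarrow> in_S l (p ^ n)"
  by (induction n) (auto intro: in_S_mult)
lemma in_S_linform[simp]: "in_S l (linform l a)"
  unfolding linform_def by (rule in_S_sum) (auto intro: in_S_mult in_S_var)

lemma const_add: "const (a + b) = const a + const b"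
  by (simp add: const_def single_add)
lemma const_mult: "const (a * b) = const a * const b"
  by (simp add: const_def mult_single)
lemma const_one[simp]: "const 1 = 1" by (simp add: const_def)
lemma const_zero[simp]: "const 0 = 0" by (simp add: const_def)
lemma const_sum: "const (\<Sum>i\<in>I. f i) = (\<Sum>i\<in>I. const (f i))"
  by (induction I rule: infinite_finite_induct) (auto simp: const_add)



definition ev :: "nat \<Rightarrow> (nat \<Rightarrow> 'a::field) \<Rightarrow> (nat \<Rightarrow> 'a) \<Rightarrow> 'a" where
  "ev l a p = (\<Sum>i<l. a i * p i)"

lemma ev_diff1: "ev l (\<lambda>i. a i - c * b i) p = ev l a p - c * ev l b p"
  by (simp add: ev_def algebra_simps sum_subtractf sum_distrib_left)

lemma ev_diff2: "ev l a (\<lambda>i. p i - c * q i) = ev l a p - c * ev l a q"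
  by (simp add: ev_def algebra_simps sum_subtractf sum_distrib_left)

lemma fredholm:
  fixes G :: "(nat \<Rightarrow> 'a::field) set"
  assumes "finite G"
  shows "(\<exists>p. ev l a p = 1 \<and> (\<forall>g\<in>G. ev l g p = 0)) \<or> (\<exists>\<mu>. \<forall>i<l. a i = (\<Sum>g\<in>G. \<mu> g * g i))"
  using assms
proof (induction G arbitrary: a rule: finite_induct)
  case empty
  show ?case
  proof (cases "\<forall>i<l. a i = 0")
    case True then show ?thesis by auto
  next
    case False
    then obtain i where i: "i < l" "a i \<noteq> 0" by auto
    let ?p = "\<lambda>j. if j = i then inverse (a i) else 0"
    have "ev l a ?p = (\<Sum>j<l. if j = i then a j * inverse (a i) else 0)"
      unfolding ev_def by (rule sum.cong) auto
    also have "\<dots> = 1" using i by simp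
    finally show ?thesis by auto
  qed
next
  case (insert g G)
  note IH = insert.IH
  show ?case
  proof (cases "\<exists>\<nu>. \<forall>i<l. g i = (\<Sum>g'\<in>G. \<nu> g' * g' i)")
    case True
    then obtain \<nu> where nu: "\<forall>i<l. g i = (\<Sum>g'\<in>G. \<nu> g' * g' i)" by auto
    from IH[of a] show ?thesis
    proof
      assume "\<exists>p. ev l a p = 1 \<and> (\<forall>g\<in>G. ev l g p = 0)"
      then obtain p where p: "ev l a p = 1" "\<forall>g\<in>G. ev l g p = 0" by auto
      have "ev l g p = (\<Sum>i<l. (\<Sum>g'\<in>G. \<nu> g' * g' i) * p i)"
        unfolding ev_def using nu by (intro sum.cong) auto
      also have "\<dots> = (\<Sum>g'\<in>G. \<nu> g' * ev l g' p)"
        by (simp add: ev_def sum_distrib_left sum_distrib_right sum.swap[of _ G] mult.assoc)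
      also have "\<dots> = 0" using p by simp
      finally show ?thesis using p by auto
    next
      assume "\<exists>\<mu>. \<forall>i<l. a i = (\<Sum>g\<in>G. \<mu> g * g i)"
      then obtain \<mu> where mu: "\<forall>i<l. a i = (\<Sum>g\<in>G. \<mu> g * g i)" by auto
      have "\<forall>i<l. a i = (\<Sum>g'\<in>insert g G. (\<mu>(g := 0)) g' * g' i)"
      proof (intro allI impI)
        fix i assume "i < l"
        have "(\<Sum>g'\<in>insert g G. (\<mu>(g := 0)) g' * g' i) = (\<Sum>g'\<in>G. (\<mu>(g := 0)) g' * g' i)"
          using insert by simp
        also have "\<dots> = (\<Sum>g'\<in>G. \<mu> g' * g' i)"
          using insert by (intro sum.cong) auto
        finally show "a i = (\<Sum>g'\<in>insert g G. (\<mu>(g := 0)) g' * g' i)" using mu \<open>i<l\<close> by simp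
      qed
      then show ?thesis by blast
    qed
  next
    case False
    with IH[of g] obtain q where q: "ev l g q = 1" "\<forall>g\<in>G. ev l g q = 0" by auto
    define c where "c = ev l a q"
    from IH[of "\<lambda>i. a i - c * g i"] show ?thesis
    proof
      assume "\<exists>p. ev l (\<lambda>i. a i - c * g i) p = 1 \<and> (\<forall>g\<in>G. ev l g p = 0)"
      then obtain r where r: "ev l (\<lambda>i. a i - c * g i) r = 1" "\<forall>g\<in>G. ev l g r = 0" by auto
      define r' where "r' = (\<lambda>i. r i - ev l g r * q i)"
      have "ev l a r' = 1"
        using r(1) unfolding r'_def ev_diff2 ev_diff1 c_def by (simp add: algebra_simps)
      moreover have "ev l g r' = 0" unfolding r'_def ev_diff2 q by simp
      moreover have "\<forall>g'\<in>G. ev l g' r' = 0" unfolding r'_def ev_diff2 using q r by simp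
      ultimately show ?thesis by auto
    next
      assume "\<exists>\<mu>. \<forall>i<l. a i - c * g i = (\<Sum>g\<in>G. \<mu> g * g i)"
      then obtain \<mu> where mu: "\<forall>i<l. a i - c * g i = (\<Sum>g\<in>G. \<mu> g * g i)" by auto
      have "\<forall>i<l. a i = (\<Sum>g'\<in>insert g G. (\<mu>(g := c)) g' * g' i)"
      proof (intro allI impI)
        fix i assume "i < l"
        have "(\<Sum>g'\<in>insert g G. (\<mu>(g := c)) g' * g' i) = c * g i + (\<Sum>g'\<in>G. (\<mu>(g := c)) g' * g' i)"
          using insert by simp
        also have "(\<Sum>g'\<in>G. (\<mu>(g := c)) g' * g' i) = (\<Sum>g'\<in>G. \<mu> g' * g' i)"
          using insert by (intro sum.cong) auto
        finally show "a i = (\<Sum>g'\<in>insert g G. (\<mu>(g := c)) g' * g' i)"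
          using mu \<open>i<l\<close> by (simp add: algebra_simps)
      qed
      then show ?thesis by blast
    qed
  qed
qed



fun Pn :: "nat \<Rightarrow> nat \<Rightarrow> (nat \<Rightarrow> 'a::field) set \<Rightarrow> 'a mpoly set" where
  "Pn l 0 G = {1}"
| "Pn l (Suc n) G = {linform l g * q | g q. g \<in> G \<and> q \<in> Pn l n G}"

lemma Pn_homog: "x \<in> Pn l n G \<Longrightarrow> homog n x \<and> in_S l x"
proof (induction n arbitrary: x)
  case 0 then show ?case by simp
next
  case (Suc n)
  then obtain g q where "x = linform l g * q" "q \<in> Pn l n G" by auto
  moreover have "homog (1 + n) (linform l g * q)"
    by (rule homog_mult) (use Suc.IH[OF \<open>q \<in> Pn l n G\<close>] homog_linform in auto)
  ultimately show ?case using Suc.IH[of q] by (auto intro: in_S_mult)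
qed

lemma Pn_split:
  "x \<in> Pn l n (insert h G) \<Longrightarrow> a + b \<le> n \<Longrightarrow>
    (\<exists>r\<in>Pn l (n - a) (insert h G). x = linform l h ^ a * r) \<or>
    (\<exists>q\<in>Pn l b G. \<exists>r\<in>Pn l (n - b) (insert h G). x = q * r)"
proof (induction n arbitrary: x a b)
  case 0 then show ?case by simp
next
  case (Suc n)
  then obtain g q where x: "x = linform l g * q" "q \<in> Pn l n (insert h G)" "g \<in> insert h G" by auto
  show ?case
  proof (cases "g = h")
    case True
    show ?thesis
    proof (cases a)
      case 0 then show ?thesis using Suc.prems by auto
    next
      case (Suc a')
      with Suc.prems have "a' + b \<le> n" by simp
      from Suc.IH[OF x(2) this] show ?thesis
      proof
        assume "\<exists>r\<in>Pn l (n - a') (insert h G). q = linform l h ^ a' * r"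
        then obtain r where "r \<in> Pn l (n - a') (insert h G)" "q = linform l h ^ a' * r" by auto
        then show ?thesis using x True Suc \<open>a' + b \<le> n\<close>
          by (intro disjI1 bexI[of _ r]) (auto simp: Suc_diff_le)
      next
        assume "\<exists>q'\<in>Pn l b G. \<exists>r\<in>Pn l (n - b) (insert h G). q = q' * r"
        then obtain q' r where qr: "q' \<in> Pn l b G" "r \<in> Pn l (n - b) (insert h G)" "q = q' * r" by auto
        have "linform l h * r \<in> Pn l (Suc n - b) (insert h G)"
          using qr \<open>a' + b \<le> n\<close> by (auto simp: Suc_diff_le)
        then show ?thesis using x True qr
          by (intro disjI2 bexI[of _ q'] bexI[of _ "linform l h * r"]) (auto simp: algebra_simps)
      qed
    qed
  next
    case False
    with x have gG: "g \<in> G" by auto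
    show ?thesis
    proof (cases b)
      case 0 then show ?thesis using Suc.prems by auto
    next
      case (Suc b')
      with Suc.prems have "a + b' \<le> n" by simp
      from Suc.IH[OF x(2) this] show ?thesis
      proof
        assume "\<exists>r\<in>Pn l (n - a) (insert h G). q = linform l h ^ a * r"
        then obtain r where "r \<in> Pn l (n - a) (insert h G)" "q = linform l h ^ a * r" by auto
        moreover have "linform l g * r \<in> Pn l (Suc n - a) (insert h G)"
          using calculation gG \<open>a + b' \<le> n\<close> by (auto simp: Suc_diff_le)
        ultimately show ?thesis using x
          by (intro disjI1 bexI[of _ "linform l g * r"]) (auto simp: algebra_simps)
      next
        assume "\<exists>q'\<in>Pn l b' G. \<exists>r\<in>Pn l (n - b') (insert h G). q = q' * r"
        then obtain q' r where qr: "q' \<in> Pn l b' G" "r \<in> Pn l (n - b') (insert h G)" "q = q' * r" by auto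
        have "linform l g * q' \<in> Pn l b G" using qr gG Suc by auto
        then show ?thesis using x qr Suc
          by (intro disjI2 bexI[of _ "linform l g * q'"] bexI[of _ r]) (auto simp: algebra_simps)
      qed
    qed
  qed
qed

inductive hc :: "nat \<Rightarrow> 'a::field mpoly set \<Rightarrow> nat \<Rightarrow> 'a mpoly \<Rightarrow> bool" for l G where
  hc0: "hc l G d 0"
| hcg: "g \<in> G \<Longrightarrow> homog e c \<Longrightarrow> in_S l c \<Longrightarrow> homog d (c * g) \<Longrightarrow> hc l G d (c * g)"
| hcadd: "hc l G d x \<Longrightarrow> hc l G d y \<Longrightarrow> hc l G d (x + y)"

lemma hc_homog: "hc l G d x \<Longrightarrow> homog d x"
  by (induction rule: hc.induct) (auto intro: homog_add)

lemma hc_adjust: "hc l G d x \<Longrightarrow> homog d' x \<Longrightarrow> hc l G d' x"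
  by (metis hc.hc0 hc_homog homog_unique)

lemma hc_gen: "g \<in> G \<Longrightarrow> homog d g \<Longrightarrow> hc l G d g"
  using hcg[of g G 0 1 l d] by simp

lemma hc_transfer:
  assumes "hc l G d x" "homog e y" "in_S l y"
    and "\<And>g. g \<in> G \<Longrightarrow> \<exists>a\<in>G'. \<exists>r e'. homog e' r \<and> in_S l r \<and> y * g = r * a"
  shows "hc l G' (e + d) (y * x)"
  using assms(1)
proof (induction rule: hc.induct)
  case hc0 then show ?case by (simp add: hc.hc0)
next
  case (hcg g e1 c d)
  then obtain a r e' where ar: "a \<in> G'" "homog e' r" "in_S l r" "y * g = r * a"
    using assms(4) by blast
  have eq: "y * (c * g) = (c * r) * a" using ar(4) by (metis mult.assoc mult.left_commute)
  have h: "homog (e + d) (y * (c * g))" using homog_mult[OF assms(2) hcg(4)] .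
  show ?case unfolding eq
    by (rule hc.hcg[OF ar(1) homog_mult[OF hcg(2) ar(2)] in_S_mult[OF hcg(3) ar(3)]]) (use h eq in simp)
next
  case (hcadd d x1 x2)
  then show ?case by (simp add: distrib_left hc.hcadd)
qed

lemma hc_mono:
  assumes "hc l G d x"
    and "\<And>g. g \<in> G \<Longrightarrow> \<exists>a\<in>G'. \<exists>r e'. homog e' r \<and> in_S l r \<and> g = r * a"
  shows "hc l G' d x"
  using hc_transfer[OF assms(1) homog_one in_S_one, of G'] assms(2) by simp

lemma hc_mono_subset: "hc l G d x \<Longrightarrow> G \<subseteq> G' \<Longrightarrow> hc l G' d x"
  by (erule hc_mono) (metis homog_one in_S_one mult_1 subsetD)

lemma hc_mult: "hc l G d x \<Longrightarrow> homog e y \<Longrightarrow> in_S l y \<Longrightarrow> hc l G (e + d) (y * x)"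
  by (erule hc_transfer) auto

lemma hc_sum: "finite I \<Longrightarrow> (\<And>i. i \<in> I \<Longrightarrow> hc l G d (f i)) \<Longrightarrow> hc l G d (\<Sum>i\<in>I. f i)"
  by (induction I rule: finite_induct) (auto intro: hc.hc0 hc.hcadd)

lemma hc_subst:
  assumes "hc l (insert z G) d x" "hc l G D (z * w)" "homog dw w" "in_S l w"
  shows "hc l G (dw + d) (w * x)"
  using assms(1)
proof (induction rule: hc.induct)
  case hc0 then show ?case by (simp add: hc.hc0)
next
  case (hcg g e c d)
  have hom: "homog (dw + d) (w * (c * g))" using homog_mult[OF assms(3) hcg(4)] .
  show ?case
  proof (cases "g = z")
    case True
    have "hc l G (e + D) (c * (z * w))" using hc_mult[OF assms(2) hcg(2,3)] .
    moreover have "c * (z * w) = w * (c * g)" using True by (simp add: algebra_simps)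
    ultimately show ?thesis using hom hc_adjust by metis
  next
    case False
    then have "g \<in> G" using hcg by auto
    have eq: "w * (c * g) = (w * c) * g" by (simp add: algebra_simps)
    show ?thesis unfolding eq
      by (rule hc.hcg[OF \<open>g \<in> G\<close> homog_mult[OF assms(3) hcg(2)] in_S_mult[OF assms(4) hcg(3)]])
        (use hom eq in simp)
  qed
next
  case (hcadd d x1 x2)
  then show ?case by (simp add: distrib_left hc.hcadd)
qed

lemma hc_prod:
  assumes "hc l G1 d1 x" "hc l G2 d2 y"
    and "\<And>a b. a \<in> G1 \<Longrightarrow> b \<in> G2 \<Longrightarrow> a * b \<in> G3"
    and "\<And>a. a \<in> G1 \<Longrightarrow> \<exists>e. homog e a \<and> in_S l a"
  shows "hc l G3 (d1 + d2) (x * y)"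
  using assms(1)
proof (induction rule: hc.induct)
  case hc0 then show ?case by (simp add: hc.hc0)
next
  case (hcg a e c d1)
  obtain ea where ea: "homog ea a" "in_S l a" using assms(4)[OF hcg(1)] by auto
  have "hc l G3 (ea + d2) (a * y)"
    by (rule hc_transfer[OF assms(2) ea]) (use assms(3)[OF hcg(1)] in \<open>metis homog_one in_S_one mult_1\<close>)
  then have "hc l G3 (e + (ea + d2)) (c * (a * y))" using hc_mult hcg(2,3) by blast
  moreover have "homog (d1 + d2) (c * a * y)" using homog_mult[OF hcg(4) hc_homog[OF assms(2)]] .
  ultimately show ?case using hc_adjust by (metis mult.assoc)
next
  case (hcadd d x1 x2)
  then show ?case by (simp add: distrib_right hc.hcadd)
qed

lemma hc_power:
  assumes "hc l (Pn l 1 G) 1 x"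
  shows "hc l (Pn l n G) n (x ^ n)"
proof (induction n)
  case 0
  show ?case using hc_gen[of 1 "Pn l 0 G" 0 l] by simp
next
  case (Suc n)
  have "hc l (Pn l (Suc n) G) (1 + n) (x * x ^ n)"
  proof (rule hc_prod[OF assms Suc])
    fix a b assume "a \<in> Pn l 1 G" "b \<in> Pn l n G"
    then show "a * b \<in> Pn l (Suc n) G" by auto
  next
    fix a assume "a \<in> Pn l 1 G" then show "\<exists>e. homog e a \<and> in_S l a" using Pn_homog by blast
  qed
  then show ?case by simp
qed



definition Fp :: "nat \<Rightarrow> ('h \<Rightarrow> nat \<Rightarrow> 'a::field) \<Rightarrow> ('h \<Rightarrow> nat) \<Rightarrow> 'h set \<Rightarrow> (nat \<Rightarrow> 'a) \<Rightarrow> 'a mpoly" where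
  "Fp l \<alpha> m B p = (\<Prod>H\<in>{H\<in>B. ev l (\<alpha> H) p \<noteq> 0}. linform l (\<alpha> H) ^ m H)"

definition Iset :: "nat \<Rightarrow> ('h \<Rightarrow> nat \<Rightarrow> 'a::field) \<Rightarrow> ('h \<Rightarrow> nat) \<Rightarrow> (nat \<Rightarrow> 'a) \<Rightarrow> 'h set \<Rightarrow> (nat \<Rightarrow> 'a) set \<Rightarrow> 'a mpoly set" where
  "Iset l \<alpha> m a0 B G = {Fp l \<alpha> m B p | p. ev l a0 p = 1 \<and> (\<forall>g\<in>G. ev l g p = 0)}"

lemma homog_linform_Suc[simp]: "homog (Suc 0) (linform l a)"
  using homog_linform by simp

lemma homog_linform_pow: "homog k (linform l a ^ k)"
  using homog_power[OF homog_linform[of l a], of k] by simp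

lemma Fp_homog: "\<exists>e. homog e (Fp l \<alpha> m B p) \<and> in_S l (Fp l \<alpha> m B p)"
proof -
  have "homog (\<Sum>H\<in>{H\<in>B. ev l (\<alpha> H) p \<noteq> 0}. m H * 1) (Fp l \<alpha> m B p)"
    unfolding Fp_def by (rule homog_prod) (rule homog_power, rule homog_linform)
  moreover have "in_S l (Fp l \<alpha> m B p)"
    unfolding Fp_def by (auto intro!: in_S_prod in_S_power)
  ultimately show ?thesis by blast
qed

lemma Fp_insert:
  assumes "finite B" "H \<notin> B"
  shows "Fp l \<alpha> m (insert H B) p =
    (if ev l (\<alpha> H) p \<noteq> 0 then linform l (\<alpha> H) ^ m H * Fp l \<alpha> m B p else Fp l \<alpha> m B p)"
proof (cases "ev l (\<alpha> H) p \<noteq> 0")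
  case True
  then have "{H'\<in>insert H B. ev l (\<alpha> H') p \<noteq> 0} = insert H {H'\<in>B. ev l (\<alpha> H') p \<noteq> 0}" by auto
  then show ?thesis using True assms unfolding Fp_def by simp
next
  case False
  then have "{H'\<in>insert H B. ev l (\<alpha> H') p \<noteq> 0} = {H'\<in>B. ev l (\<alpha> H') p \<noteq> 0}" by auto
  then show ?thesis using False unfolding Fp_def by simp
qed

lemma linform_span:
  assumes "finite G" "\<forall>i<l. a i = (\<Sum>g\<in>G. \<mu> g * g i)"
  shows "linform l a = (\<Sum>g\<in>G. const (\<mu> g) * linform l g)"
proof -
  have "linform l a = (\<Sum>i<l. const (\<Sum>g\<in>G. \<mu> g * g i) * var i)"
    unfolding linform_def using assms(2) by (intro sum.cong) auto
  also have "\<dots> = (\<Sum>i<l. \<Sum>g\<in>G. const (\<mu> g) * (const (g i) * var i))"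
    by (simp add: const_sum const_mult sum_distrib_right mult.assoc)
  also have "\<dots> = (\<Sum>g\<in>G. const (\<mu> g) * linform l g)"
    by (subst sum.swap) (simp add: linform_def sum_distrib_left)
  finally show ?thesis .
qed

lemma hc_span:
  assumes "finite G" "\<forall>i<l. a i = (\<Sum>g\<in>G. \<mu> g * g i)"
  shows "hc l (Pn l 1 G) 1 (linform l a)"
  unfolding linform_span[OF assms]
proof (rule hc_sum[OF assms(1)])
  fix g assume "g \<in> G"
  then have gen: "linform l g * 1 \<in> Pn l 1 G" by auto
  have "homog (0 + 1) (const (\<mu> g) * (linform l g * 1))"
    by (rule homog_mult) auto
  from hcg[OF gen homog_const in_S_const] this
  show "hc l (Pn l 1 G) 1 (const (\<mu> g) * linform l g)" by simp
qed

lemma main_lemma: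
  assumes "finite B" "finite G"
  shows "\<exists>M. hc l (Iset l \<alpha> m a0 B G \<union> Pn l N G) M (linform l a0 ^ M)"
  using assms
proof (induction B arbitrary: G N rule: finite_induct)
  case empty
  have F1: "Fp l \<alpha> m {} p = 1" for p by (simp add: Fp_def)
  from fredholm[OF empty.prems, of l a0] show ?case
  proof
    assume "\<exists>p. ev l a0 p = 1 \<and> (\<forall>g\<in>G. ev l g p = 0)"
    then have "1 \<in> Iset l \<alpha> m a0 {} G" unfolding Iset_def using F1 by auto
    then have "hc l (Iset l \<alpha> m a0 {} G \<union> Pn l N G) 0 1" by (intro hc_gen) auto
    then show ?thesis by (intro exI[of _ 0]) simp
  next
    assume "\<exists>\<mu>. \<forall>i<l. a0 i = (\<Sum>g\<in>G. \<mu> g * g i)"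
    then obtain \<mu> where "\<forall>i<l. a0 i = (\<Sum>g\<in>G. \<mu> g * g i)" by auto
    from hc_power[OF hc_span[OF empty.prems this], of N]
    show ?thesis by (intro exI[of _ N]) (erule hc_mono_subset, auto)
  qed
next
  case (insert H B)
  define h where "h = \<alpha> H"
  define hh where "hh = linform l h ^ m H"
  have hh_hom: "homog (m H) hh" "in_S l hh" unfolding hh_def
    by (auto intro: homog_linform_pow in_S_power)
  let ?G' = "Iset l \<alpha> m a0 (insert H B) G \<union> Pn l N G"
  obtain M2 where M2: "hc l (Iset l \<alpha> m a0 B G \<union> Pn l N G) M2 (linform l a0 ^ M2)"
    using insert.IH[OF insert.prems] by blast
  have T1: "hc l ?G' (m H + M2) (hh * linform l a0 ^ M2)"
  proof (rule hc_transfer[OF M2 hh_hom])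
    fix g assume "g \<in> Iset l \<alpha> m a0 B G \<union> Pn l N G"
    then show "\<exists>a\<in>?G'. \<exists>r e'. homog e' r \<and> in_S l r \<and> hh * g = r * a"
    proof
      assume "g \<in> Iset l \<alpha> m a0 B G"
      then obtain p where p: "g = Fp l \<alpha> m B p" "ev l a0 p = 1" "\<forall>g\<in>G. ev l g p = 0"
        unfolding Iset_def by auto
      have mem: "Fp l \<alpha> m (insert H B) p \<in> ?G'" unfolding Iset_def using p by auto
      show ?thesis
      proof (cases "ev l h p \<noteq> 0")
        case True
        then have "hh * g = 1 * Fp l \<alpha> m (insert H B) p"
          using p Fp_insert[OF insert.hyps, of l \<alpha> m p] unfolding hh_def h_def by simp
        then show ?thesis using mem homog_one in_S_one by blast
      next
        case False
        then have "hh * g = hh * Fp l \<alpha> m (insert H B) p"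
          using p Fp_insert[OF insert.hyps, of l \<alpha> m p] unfolding hh_def h_def by simp
        then show ?thesis using mem hh_hom by blast
      qed
    next
      assume "g \<in> Pn l N G"
      then show ?thesis using hh_hom by (intro bexI[of _ g]) (auto simp: mult.commute)
    qed
  qed
  obtain M1 where M1: "hc l (Iset l \<alpha> m a0 B (insert h G) \<union> Pn l (N + m H) (insert h G)) M1 (linform l a0 ^ M1)"
    using insert.IH[of "insert h G" "N + m H"] insert.prems by blast
  have T2: "hc l (insert hh ?G') M1 (linform l a0 ^ M1)"
  proof (rule hc_mono[OF M1])
    fix g assume "g \<in> Iset l \<alpha> m a0 B (insert h G) \<union> Pn l (N + m H) (insert h G)"
    then show "\<exists>a\<in>insert hh ?G'. \<exists>r e'. homog e' r \<and> in_S l r \<and> g = r * a"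
    proof
      assume "g \<in> Iset l \<alpha> m a0 B (insert h G)"
      then obtain p where p: "g = Fp l \<alpha> m B p" "ev l a0 p = 1" "ev l h p = 0" "\<forall>g\<in>G. ev l g p = 0"
        unfolding Iset_def by auto
      then have "g = Fp l \<alpha> m (insert H B) p" using Fp_insert[OF insert.hyps, of l \<alpha> m p] unfolding h_def by simp
      moreover have "Fp l \<alpha> m (insert H B) p \<in> ?G'" unfolding Iset_def using p by auto
      ultimately show ?thesis using homog_one in_S_one by (metis insertI2 mult_1)
    next
      assume g: "g \<in> Pn l (N + m H) (insert h G)"
      from Pn_split[OF g, of "m H" N, OF eq_imp_le[OF add.commute]] show ?thesis
      proof
        assume "\<exists>r\<in>Pn l (N + m H - m H) (insert h G). g = linform l h ^ m H * r"
        then obtain r where "r \<in> Pn l (N + m H - m H) (insert h G)" "g = hh * r"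
          unfolding hh_def by auto
        then show ?thesis using Pn_homog by (metis insertI1 mult.commute)
      next
        assume "\<exists>q\<in>Pn l N G. \<exists>r\<in>Pn l (N + m H - N) (insert h G). g = q * r"
        then obtain q r where "q \<in> Pn l N G" "r \<in> Pn l (N + m H - N) (insert h G)" "g = q * r"
          by auto
        then show ?thesis using Pn_homog by (metis UnI2 insertI2 mult.commute)
      qed
    qed
  qed
  have "hc l ?G' (M2 + M1) (linform l a0 ^ M2 * linform l a0 ^ M1)"
    by (rule hc_subst[OF T2 T1]) (auto intro: homog_linform_pow in_S_power)
  then show ?case by (metis power_add)
qed



lemma der_lin_scaled:
  "der_lin l (\<lambda>i. if i < l then X * const (p i) else 0) a = X * const (ev l a p)"
proof -
  have "der_lin l (\<lambda>i. if i < l then X * const (p i) else 0) a = (\<Sum>i<l. X * const (a i * p i))"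
    unfolding der_lin_def by (intro sum.cong) (auto simp: const_mult algebra_simps)
  also have "\<dots> = X * const (ev l a p)"
    by (simp add: ev_def const_sum sum_distrib_left)
  finally show ?thesis .
qed

lemma der_lin_add: "der_lin l (\<lambda>i. t1 i + t2 i) a = der_lin l t1 a + der_lin l t2 a"
  by (simp add: der_lin_def distrib_left sum.distrib)

lemma der_lin_mult: "der_lin l (\<lambda>i. Y * t i) a = Y * der_lin l t a"
  by (simp add: der_lin_def sum_distrib_left algebra_simps)

lemma dvd_S_add: "dvd_S l q x \<Longrightarrow> dvd_S l q y \<Longrightarrow> dvd_S l q (x + y)"
  unfolding dvd_S_def by (metis distrib_left in_S_add)

lemma theta_exists:
  assumes "hc l (Iset l \<alpha> m a0 B {}) d x" "finite B"
  shows "\<exists>\<theta>. is_der l \<theta> \<and> (\<forall>i<l. homog d (\<theta> i)) \<and> der_lin l \<theta> a0 = x \<and>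
     (\<forall>H\<in>B. dvd_S l (linform l (\<alpha> H) ^ m H) (der_lin l \<theta> (\<alpha> H)))"
  using assms(1)
proof (induction rule: hc.induct)
  case (hc0 d)
  have "der_lin l (\<lambda>_. 0) a = 0" for a :: "nat \<Rightarrow> 'a" by (simp add: der_lin_def)
  moreover have "dvd_S l q 0" for q :: "'a mpoly" unfolding dvd_S_def by (intro exI[of _ 0]) simp
  ultimately show ?case by (intro exI[of _ "\<lambda>_. 0"]) (simp add: is_der_def)
next
  case (hcg g e c d)
  then obtain p where p: "g = Fp l \<alpha> m B p" "ev l a0 p = 1" unfolding Iset_def by auto
  define \<theta> where "\<theta> = (\<lambda>i. if i < l then (c * g) * const (p i) else 0)"
  obtain eg where eg: "homog eg g" "in_S l g" using Fp_homog p(1) by blast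
  have "is_der l \<theta>" unfolding is_der_def \<theta>_def
    using hcg eg by (auto intro!: in_S_mult)
  moreover have "\<forall>i<l. homog d (\<theta> i)"
    unfolding \<theta>_def using homog_mult[OF hcg(4) homog_const] by simp
  moreover have "der_lin l \<theta> a0 = c * g" unfolding \<theta>_def der_lin_scaled p(2) by simp
  moreover have "dvd_S l (linform l (\<alpha> H) ^ m H) (der_lin l \<theta> (\<alpha> H))" if "H \<in> B" for H
  proof (cases "ev l (\<alpha> H) p = 0")
    case True
    then show ?thesis unfolding \<theta>_def der_lin_scaled dvd_S_def by (intro exI[of _ 0]) simp
  next
    case False
    let ?S = "{H\<in>B. ev l (\<alpha> H) p \<noteq> 0}"
    have "H \<in> ?S" using False that by auto
    then have "g = linform l (\<alpha> H) ^ m H * (\<Prod>H'\<in>?S - {H}. linform l (\<alpha> H') ^ m H')"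
      unfolding p(1) Fp_def using assms(2) by (simp add: prod.remove)
    moreover have "in_S l (\<Prod>H'\<in>?S - {H}. linform l (\<alpha> H') ^ m H')"
      by (auto intro!: in_S_prod in_S_power)
    ultimately show ?thesis unfolding \<theta>_def der_lin_scaled dvd_S_def
      using hcg(3)
      by (intro exI[of _ "c * (\<Prod>H'\<in>?S - {H}. linform l (\<alpha> H') ^ m H') * const (ev l (\<alpha> H) p)"])
        (auto intro!: in_S_mult simp: algebra_simps)
  qed
  ultimately show ?case by blast
next
  case (hcadd d x y)
  then obtain t1 t2 where t1: "is_der l t1" "\<forall>i<l. homog d (t1 i)" "der_lin l t1 a0 = x"
     "\<forall>H\<in>B. dvd_S l (linform l (\<alpha> H) ^ m H) (der_lin l t1 (\<alpha> H))"
    and t2: "is_der l t2" "\<forall>i<l. homog d (t2 i)" "der_lin l t2 a0 = y"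
     "\<forall>H\<in>B. dvd_S l (linform l (\<alpha> H) ^ m H) (der_lin l t2 (\<alpha> H))"
    by blast
  show ?case
    apply (rule exI[of _ "\<lambda>i. t1 i + t2 i"])
    using t1 t2 by (auto simp: der_lin_add is_der_def intro: homog_add in_S_add dvd_S_add)
qed



theorem proposition3p5:
  fixes A :: "'h set" and \<alpha> :: "'h \<Rightarrow> nat \<Rightarrow> 'a::field" and m :: "'h \<Rightarrow> nat"
    and l :: nat and H0 :: 'h
  assumes "multiarr l A \<alpha> m" and "H0 \<in> A"
  shows "\<exists>k0. \<forall>k\<ge>k0. \<exists>\<theta>. good_summand l A \<alpha> (\<lambda>H. m H + k * delta H0 H) H0 \<theta>"
proof -
  have finA: "finite A" using assms(1) unfolding multiarr_def by auto
  define B where "B = A - {H0}"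
  define a0 where "a0 = \<alpha> H0"
  have finB: "finite B" using finA unfolding B_def by auto
  obtain M where M: "hc l (Iset l \<alpha> m a0 B {} \<union> Pn l 1 {}) M (linform l a0 ^ M)"
    using main_lemma[OF finB finite.emptyI] by blast
  have "Pn l 1 {} = ({} :: 'a mpoly set)" by simp
  with M have "hc l (Iset l \<alpha> m a0 B {}) M (linform l a0 ^ M)" by simp
  from theta_exists[OF this finB] obtain \<theta> where th: "is_der l \<theta>" "\<forall>i<l. homog M (\<theta> i)"
    "der_lin l \<theta> a0 = linform l a0 ^ M"
    "\<forall>H\<in>B. dvd_S l (linform l (\<alpha> H) ^ m H) (der_lin l \<theta> (\<alpha> H))" by blast
  show ?thesis
  proof (intro exI[of _ M] allI impI)
    fix k assume k: "M \<le> k"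
    define m' where "m' = (\<lambda>H. m H + k * delta H0 H)"
    define N where "N = m H0 + k"
    have m'0: "m' H0 = N" unfolding m'_def N_def delta_def by simp
    have m'H: "m' H = m H" if "H \<noteq> H0" for H unfolding m'_def delta_def using that by simp
    define Y where "Y = linform l a0 ^ (N - M)"
    define \<theta>' where "\<theta>' = (\<lambda>i. Y * \<theta> i)"
    have NM: "N - M + M = N" using k unfolding N_def by simp
    have dl: "der_lin l \<theta>' a = Y * der_lin l \<theta> a" for a
      unfolding \<theta>'_def by (rule der_lin_mult)
    have d0: "der_lin l \<theta>' a0 = linform l a0 ^ N"
      unfolding dl th(3) Y_def by (metis NM power_add)
    have isd: "is_der l \<theta>'"
      using th(1) unfolding is_der_def \<theta>'_def Y_def by (auto intro!: in_S_mult in_S_power)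
    have hom: "\<forall>i<l. homog (m' H0) (\<theta>' i)"
    proof (intro allI impI)
      fix i assume "i < l"
      have "homog (N - M + M) (\<theta>' i)"
        unfolding \<theta>'_def Y_def by (rule homog_mult[OF homog_linform_pow]) (use th(2) \<open>i<l\<close> in auto)
      then show "homog (m' H0) (\<theta>' i)" using NM m'0 by simp
    qed
    have dv: "\<forall>H\<in>A. dvd_S l (linform l (\<alpha> H) ^ m' H) (der_lin l \<theta>' (\<alpha> H))"
    proof
      fix H assume "H \<in> A"
      show "dvd_S l (linform l (\<alpha> H) ^ m' H) (der_lin l \<theta>' (\<alpha> H))"
      proof (cases "H = H0")
        case True
        then show ?thesis using d0 m'0 unfolding a0_def dvd_S_def
          by (intro exI[of _ 1]) simp
      next
        case False
        then have "H \<in> B" using \<open>H \<in> A\<close> unfolding B_def by auto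
        with th(4) obtain r where r: "in_S l r" "der_lin l \<theta> (\<alpha> H) = linform l (\<alpha> H) ^ m H * r"
          unfolding dvd_S_def by blast
        show ?thesis unfolding dvd_S_def dl m'H[OF False] r(2)
          by (rule exI[of _ "Y * r"]) (auto simp: Y_def algebra_simps intro!: in_S_mult in_S_power r(1))
      qed
    qed
    show "\<exists>\<theta>. good_summand l A \<alpha> (\<lambda>H. m H + k * delta H0 H) H0 \<theta>"
      unfolding good_summand_def in_D_def m'_def[symmetric]
      using isd hom dv d0 m'0 unfolding a0_def by auto
  qed
qed

end
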